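(* In the two-project discovery model described in the context, suppose the principal's payoff is $1$ if at least one project is approved (i.e., she proposes a nonempty set $S$ and it is approved) and $0$ otherwise, and suppose $\mu_1<\mu_2<0$. Then discovering the project $i$ satisfying $\sigma_i/\mu_i<\sigma_j/\mu_j$ (where $\{i,j\}=\{1,2\}$) is better than discovering project $j$, and discovering both project values is strictly better than discovering either project value individually.
   Context: Model. There are two projects $i\in\{1,2\}$. The agent's values $v=(v_1,v_2)\in\mathbb{R}^2$ are drawn from a common prior that is bivariate normal with means $\mu_1,\mu_2$, standard deviations $\sigma_1,\sigma_2>0$ and correlation $\rho\in(0,1)$. Timing: (1) the principal chooses which project values to publicly discover (project 1's value, project 2's value, or both); (2) the chosen values are publicly revealed and the agent forms a posterior by Bayes' rule; (3) knowing the revealed values, the principal proposes a subset $S\subseteq\{1,2\}$; (4) the agent approves iff $\sum_{i\in S}\mathbb{E}[v_i\mid\text{revealed information}]\ge 0$. The principal chooses the proposal to maximize her payoff given the revealed information, and one discovery rule is better than another if its ex-ante expected payoff is strictly higher. *)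

theory Defs
  imports "HOL-Probability.Probability"
begin

definition binorm_pdf :: "real \<Rightarrow> real \<Rightarrow> real \<Rightarrow> real \<Rightarrow> real \<Rightarrow> real \<times> real \<Rightarrow> real" where
  "binorm_pdf mu1 mu2 s1 s2 r p =
     (let x = fst p; y = snd p;
          q = ((x - mu1) / s1)\<^sup>2 - 2 * r * ((x - mu1) / s1) * ((y - mu2) / s2) + ((y - mu2) / s2)\<^sup>2
      in exp (- q / (2 * (1 - r\<^sup>2))) / (2 * pi * s1 * s2 * sqrt (1 - r\<^sup>2)))"

definition prior :: "real \<Rightarrow> real \<Rightarrow> real \<Rightarrow> real \<Rightarrow> real \<Rightarrow> (real \<times> real) measure" where
  "prior mu1 mu2 s1 s2 r = density lborel (\<lambda>p. ennreal (binorm_pdf mu1 mu2 s1 s2 r p))"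

datatype discovery = Disc1 | Disc2 | DiscBoth

text \<open>If only project 1's value x is revealed, the
  posterior density of v2 is proportional to the joint density at (x, y), so its mean is
  (\<integral> y f(x,y) dy) / (\<integral> f(x,y) dy); symmetrically for project 2.
  Projects are indexed by 1 and 2.\<close>

definition posterior_mean :: "real \<Rightarrow> real \<Rightarrow> real \<Rightarrow> real \<Rightarrow> real \<Rightarrow> discovery \<Rightarrow> real \<times> real \<Rightarrow> nat \<Rightarrow> real" where
  "posterior_mean mu1 mu2 s1 s2 r D v i =
     (let f = binorm_pdf mu1 mu2 s1 s2 r; x = fst v; y = snd v in
      case D of
        DiscBoth \<Rightarrow> (if i = 1 then x else y)
      | Disc1 \<Rightarrow> (if i = 1 then x
                 else (\<integral>t. t * f (x, t) \<partial>lborel) / (\<integral>t. f (x, t) \<partial>lborel))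
      | Disc2 \<Rightarrow> (if i = 2 then y
                 else (\<integral>t. t * f (t, y) \<partial>lborel) / (\<integral>t. f (t, y) \<partial>lborel)))"

definition approves :: "nat set \<Rightarrow> (nat \<Rightarrow> real) \<Rightarrow> bool" where
  "approves S m \<longleftrightarrow> (\<Sum>i\<in>S. m i) \<ge> 0"

definition approval_payoff :: "nat set \<Rightarrow> bool \<Rightarrow> real" where
  "approval_payoff S a = (if S \<noteq> {} \<and> a then 1 else 0)"

definition principal_value :: "(nat set \<Rightarrow> bool \<Rightarrow> real) \<Rightarrow> (nat \<Rightarrow> real) \<Rightarrow> real" where
  "principal_value u m = Max ((\<lambda>S. u S (approves S m)) ` Pow {1, 2})"

definition ex_ante_payoff :: "real \<Rightarrow> real \<Rightarrow> real \<Rightarrow> real \<Rightarrow> real \<Rightarrow> discovery \<Rightarrow> real" where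
  "ex_ante_payoff mu1 mu2 s1 s2 r D =
     (\<integral>v. principal_value approval_payoff (posterior_mean mu1 mu2 s1 s2 r D v)
        \<partial>(prior mu1 mu2 s1 s2 r))"

definition better :: "real \<Rightarrow> real \<Rightarrow> real \<Rightarrow> real \<Rightarrow> real \<Rightarrow> discovery \<Rightarrow> discovery \<Rightarrow> bool" where
  "better mu1 mu2 s1 s2 r D D' \<longleftrightarrow> ex_ante_payoff mu1 mu2 s1 s2 r D > ex_ante_payoff mu1 mu2 s1 s2 r D'"

end

theory Submission
  imports Defs
begin


lemma pdf_factor:
  assumes s1: "s1 > 0" and s2: "s2 > 0" and r: "0 < r" "r < 1"
  shows "binorm_pdf mu1 mu2 s1 s2 r (x, y) =
    normal_density mu1 s1 x * normal_density (mu2 + r * s2 / s1 * (x - mu1)) (s2 * sqrt (1 - r\<^sup>2)) y"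
proof -
  define u where "u = (x - mu1) / s1"
  define w where "w = (y - mu2) / s2"
  have r2: "0 < 1 - r\<^sup>2" using r by (simp add: power2_eq_square) (smt (verit) mult_less_cancel_right2 mult_nonneg_nonneg)
  have sq: "sqrt (1 - r\<^sup>2) ^ 2 = 1 - r\<^sup>2" using r2 by simp
  have sqp: "sqrt (1 - r\<^sup>2) > 0" using r2 by simp
  have e1: "-(x - mu1)\<^sup>2 / (2 * s1\<^sup>2) = - u\<^sup>2 / 2" using s1 by (simp add: u_def power_divide)
  have e2: "-(y - (mu2 + r * s2 / s1 * (x - mu1)))\<^sup>2 / (2 * (s2 * sqrt (1 - r\<^sup>2))\<^sup>2)
       = - (w - r * u)\<^sup>2 / (2 * (1 - r\<^sup>2))"
  proof -
    have "y - (mu2 + r * s2 / s1 * (x - mu1)) = s2 * (w - r * u)" using s1 s2 by (simp add: u_def w_def field_simps)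
    then show ?thesis using s2 r2 by (simp add: power_mult_distrib sq)
  qed
  have e3: "- u\<^sup>2 / 2 + - (w - r * u)\<^sup>2 / (2 * (1 - r\<^sup>2)) = - (u\<^sup>2 - 2 * r * u * w + w\<^sup>2) / (2 * (1 - r\<^sup>2))"
    using r2 by (simp add: field_simps power2_eq_square) 
  have c1: "sqrt (2 * pi * s1\<^sup>2) = sqrt (2 * pi) * s1" using s1 by (simp add: real_sqrt_mult)
  have c2: "sqrt (2 * pi * (s2 * sqrt (1 - r\<^sup>2))\<^sup>2) = sqrt (2 * pi) * (s2 * sqrt (1 - r\<^sup>2))" using s2 sqp
    by (simp add: real_sqrt_mult power_mult_distrib)
  have c3: "sqrt (2 * pi) * sqrt (2 * pi) = 2 * pi" by simp
  have "normal_density mu1 s1 x * normal_density (mu2 + r * s2 / s1 * (x - mu1)) (s2 * sqrt (1 - r\<^sup>2)) y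
     = exp (-(x - mu1)\<^sup>2 / (2 * s1\<^sup>2)) * exp (-(y - (mu2 + r * s2 / s1 * (x - mu1)))\<^sup>2 / (2 * (s2 * sqrt (1 - r\<^sup>2))\<^sup>2))
       / (sqrt (2 * pi) * sqrt (2 * pi) * s1 * s2 * sqrt (1 - r\<^sup>2))"
    unfolding normal_density_def c1 c2 by (simp add: field_simps)
  also have "\<dots> = exp (- (u\<^sup>2 - 2 * r * u * w + w\<^sup>2) / (2 * (1 - r\<^sup>2))) / (2 * pi * s1 * s2 * sqrt (1 - r\<^sup>2))"
    unfolding e1 e2 c3 exp_add[symmetric] e3 ..
  finally show ?thesis unfolding binorm_pdf_def u_def w_def Let_def by simp
qed



lemma pv_eq: "principal_value approval_payoff m = (if m 1 \<ge> 0 \<or> m 2 \<ge> 0 then 1 else 0)"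
proof -
  have P: "Pow {1::nat, 2} = {{}, {1}, {2}, {1, 2}}" by (auto simp: Pow_insert)
  have A: "approves {1} m = (m 1 \<ge> 0)" "approves {2} m = (m 2 \<ge> 0)"
    "approves {1, 2} m = (m 1 + m 2 \<ge> 0)"
    by (simp_all add: approves_def)
  have I: "(\<lambda>S. approval_payoff S (approves S m)) ` Pow {1, 2} = {0, (if m 1 \<ge> 0 then 1 else 0),
      (if m 2 \<ge> 0 then 1 else 0), (if m 1 + m 2 \<ge> 0 then 1 else 0)}"
    unfolding P image_insert image_empty by (simp add: approval_payoff_def approves_def)
  show ?thesis
  proof (cases "m 1 \<ge> 0 \<or> m 2 \<ge> 0")
    case True
    have "Max ((\<lambda>S. approval_payoff S (approves S m)) ` Pow {1, 2}) = 1"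
      unfolding I by (rule Max_eqI) (use True in auto)
    then show ?thesis using True unfolding principal_value_def by simp
  next
    case False
    then show ?thesis unfolding principal_value_def I by simp
  qed
qed

lemma fst_meas[measurable]: "fst \<in> borel_measurable (borel :: (real \<times> real) measure)"
  by (intro borel_measurable_continuous_onI continuous_intros)

lemma snd_meas[measurable]: "snd \<in> borel_measurable (borel :: (real \<times> real) measure)"
  by (intro borel_measurable_continuous_onI continuous_intros)

lemma binorm_meas[measurable]: "binorm_pdf mu1 mu2 s1 s2 r \<in> borel_measurable borel"
  unfolding binorm_pdf_def Let_def
  by measurable

lemma pdf_swap: "binorm_pdf mu1 mu2 s1 s2 r (x, y) = binorm_pdf mu2 mu1 s2 s1 r (y, x)"
proof -
  have "\<And>u w::real. u\<^sup>2 - 2 * r * u * w + w\<^sup>2 = w\<^sup>2 - 2 * r * w * u + u\<^sup>2" by algebra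
  then have "((x - mu1) / s1)\<^sup>2 - 2 * r * ((x - mu1) / s1) * ((y - mu2) / s2) + ((y - mu2) / s2)\<^sup>2
    = ((y - mu2) / s2)\<^sup>2 - 2 * r * ((y - mu2) / s2) * ((x - mu1) / s1) + ((x - mu1) / s1)\<^sup>2" .
  then show ?thesis unfolding binorm_pdf_def Let_def by (simp only: fst_conv snd_conv mult_ac)
qed

lemma nn_swap:
  fixes g :: "real \<times> real \<Rightarrow> ennreal"
  assumes [measurable]: "g \<in> borel_measurable borel"
  shows "(\<integral>\<^sup>+p. g p \<partial>lborel) = (\<integral>\<^sup>+p. g (snd p, fst p) \<partial>lborel)"
proof -
  have gm: "g \<in> borel_measurable (lborel \<Otimes>\<^sub>M lborel)" by (simp add: lborel_prod)
  have "(\<integral>\<^sup>+p. g p \<partial>lborel) = (\<integral>\<^sup>+p. g p \<partial>(lborel \<Otimes>\<^sub>M lborel))" by (simp add: lborel_prod)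
  also have "\<dots> = (\<integral>\<^sup>+p. g p \<partial>(distr (lborel \<Otimes>\<^sub>M lborel) (lborel \<Otimes>\<^sub>M lborel) (\<lambda>(x, y). (y, x))))"
    by (simp add: lborel_pair.distr_pair_swap[symmetric])
  also have "\<dots> = (\<integral>\<^sup>+p. g ((\<lambda>(x, y). (y, x)) p) \<partial>(lborel \<Otimes>\<^sub>M lborel))"
    by (rule nn_integral_distr[OF measurable_pair_swap']) (simp add: gm)
  also have "\<dots> = (\<integral>\<^sup>+p. g (snd p, fst p) \<partial>lborel)" by (simp add: lborel_prod case_prod_beta)
  finally show ?thesis .
qed

lemma nn_refl:
  fixes g :: "real \<times> real \<Rightarrow> ennreal"
  assumes [measurable]: "g \<in> borel_measurable borel"
  shows "(\<integral>\<^sup>+p. g p \<partial>lborel) = (\<integral>\<^sup>+p. g (c - p) \<partial>lborel)"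
proof -
  have eq: "lborel = density (distr lborel borel ((-) c)) (\<lambda>_. 1)"
    using lborel_affine[of "-1" c] by simp
  have "(\<integral>\<^sup>+p. g p \<partial>lborel) = (\<integral>\<^sup>+p. g p \<partial>(distr lborel borel ((-) c)))"
    by (subst eq) (simp add: density_1)
  also have "\<dots> = (\<integral>\<^sup>+p. g (c - p) \<partial>lborel)"
    by (subst nn_integral_distr) auto
  finally show ?thesis .
qed



lemma nn_normal: "s > 0 \<Longrightarrow> (\<integral>\<^sup>+y. ennreal (normal_density m s y) \<partial>lborel) = 1"
  by (simp add: nn_integral_eq_integral)

lemma r2pos: "0 < r \<Longrightarrow> r < 1 \<Longrightarrow> 0 < 1 - (r::real)\<^sup>2"
  by (simp add: power2_eq_square) (smt (verit) mult_less_cancel_right2 mult_nonneg_nonneg)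

lemma pdf_pos: "s1 > 0 \<Longrightarrow> s2 > 0 \<Longrightarrow> 0 < r \<Longrightarrow> r < 1 \<Longrightarrow> 0 < binorm_pdf mu1 mu2 s1 s2 r p"
  using pdf_factor[of s1 s2 r mu1 mu2 "fst p" "snd p"] r2pos[of r]
  by (simp add: normal_density_pos)

lemma marg1:
  assumes s1: "s1 > 0" and s2: "s2 > 0" and r: "0 < r" "r < 1" and B[measurable]: "B \<in> sets borel"
  shows "(\<integral>\<^sup>+p. ennreal (binorm_pdf mu1 mu2 s1 s2 r p) * indicator {p. fst p \<in> B} p \<partial>lborel)
       = (\<integral>\<^sup>+x. ennreal (normal_density mu1 s1 x) * indicator B x \<partial>lborel)"
proof -
  let ?f = "\<lambda>p. ennreal (binorm_pdf mu1 mu2 s1 s2 r p) * indicator {p. fst p \<in> B} p"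
  have sc: "s2 * sqrt (1 - r\<^sup>2) > 0" using s2 r2pos[OF r] by simp
  have fm: "?f \<in> borel_measurable (lborel \<Otimes>\<^sub>M lborel)" by (simp add: lborel_prod)
  have "(\<integral>\<^sup>+p. ?f p \<partial>lborel) = (\<integral>\<^sup>+p. ?f p \<partial>(lborel \<Otimes>\<^sub>M lborel))" by (simp add: lborel_prod)
  also have "\<dots> = (\<integral>\<^sup>+x. \<integral>\<^sup>+y. ?f (x, y) \<partial>lborel \<partial>lborel)"
    by (rule lborel.nn_integral_fst[OF fm, symmetric])
  also have "\<dots> = (\<integral>\<^sup>+x. ennreal (normal_density mu1 s1 x) * indicator B x \<partial>lborel)"
  proof (rule nn_integral_cong)
    fix x
    have "(\<integral>\<^sup>+y. ?f (x, y) \<partial>lborel) = (\<integral>\<^sup>+y. (ennreal (normal_density mu1 s1 x) * indicator B x) *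
        ennreal (normal_density (mu2 + r * s2 / s1 * (x - mu1)) (s2 * sqrt (1 - r\<^sup>2)) y) \<partial>lborel)"
      by (rule nn_integral_cong) (simp add: pdf_factor[OF s1 s2 r] ennreal_mult' mult_ac split: split_indicator)
    also have "\<dots> = ennreal (normal_density mu1 s1 x) * indicator B x"
      by (simp add: nn_integral_cmult nn_normal[OF sc])
    finally show "(\<integral>\<^sup>+y. ?f (x, y) \<partial>lborel) = ennreal (normal_density mu1 s1 x) * indicator B x" .
  qed
  finally show ?thesis .
qed

lemma prior_prob:
  assumes s1: "s1 > 0" and s2: "s2 > 0" and r: "0 < r" "r < 1"
  shows "prob_space (prior mu1 mu2 s1 s2 r)"
proof
  have "emeasure (prior mu1 mu2 s1 s2 r) (space (prior mu1 mu2 s1 s2 r))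
     = (\<integral>\<^sup>+p. ennreal (binorm_pdf mu1 mu2 s1 s2 r p) * indicator {p. fst p \<in> UNIV} p \<partial>lborel)"
    unfolding prior_def by (simp add: emeasure_density)
  also have "\<dots> = 1" using marg1[OF s1 s2 r, of UNIV] by (simp add: nn_normal[OF s1])
  finally show "emeasure (prior mu1 mu2 s1 s2 r) (space (prior mu1 mu2 s1 s2 r)) = 1" .
qed

lemma pm1:
  assumes s1: "s1 > 0" and s2: "s2 > 0" and r: "0 < r" "r < 1"
  shows "posterior_mean mu1 mu2 s1 s2 r Disc1 (x, y) = (\<lambda>i. if i = 1 then x else mu2 + r * s2 / s1 * (x - mu1))"
proof -
  let ?m = "mu2 + r * s2 / s1 * (x - mu1)" and ?c = "s2 * sqrt (1 - r\<^sup>2)"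
  have sc: "?c > 0" using s2 r2pos[OF r] by simp
  have a: "(\<integral>t. t * binorm_pdf mu1 mu2 s1 s2 r (x, t) \<partial>lborel) = normal_density mu1 s1 x * ?m"
  proof -
    have "(\<integral>t. t * binorm_pdf mu1 mu2 s1 s2 r (x, t) \<partial>lborel) = (\<integral>t. normal_density mu1 s1 x * (normal_density ?m ?c t * t) \<partial>lborel)"
      by (simp add: pdf_factor[OF s1 s2 r] mult_ac)
    also have "\<dots> = normal_density mu1 s1 x * ?m"
      by (simp add: integral_normal_moment_nz_1[OF sc])
    finally show ?thesis .
  qed
  have b: "(\<integral>t. binorm_pdf mu1 mu2 s1 s2 r (x, t) \<partial>lborel) = normal_density mu1 s1 x"
    by (simp add: pdf_factor[OF s1 s2 r] sc)
  have p: "normal_density mu1 s1 x > 0" using s1 by (simp add: normal_density_pos)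
  show ?thesis unfolding posterior_mean_def Let_def using p by (auto simp: fun_eq_iff a b)
qed

lemma pm2:
  assumes s1: "s1 > 0" and s2: "s2 > 0" and r: "0 < r" "r < 1"
  shows "posterior_mean mu1 mu2 s1 s2 r Disc2 (x, y) = (\<lambda>i. if i = 2 then y else mu1 + r * s1 / s2 * (y - mu2))"
proof -
  have e1: "posterior_mean mu1 mu2 s1 s2 r Disc2 (x, y) = (\<lambda>i. if i = 2 then y else
     posterior_mean mu2 mu1 s2 s1 r Disc1 (y, x) 2)"
    unfolding posterior_mean_def Let_def by (auto simp: fun_eq_iff pdf_swap[of mu1 mu2 s1 s2 r])
  have e2: "posterior_mean mu2 mu1 s2 s1 r Disc1 (y, x) 2 = mu1 + r * s1 / s2 * (y - mu2)"
    using pm1[OF s2 s1 r, of mu2 mu1 y x] by simp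
  show ?thesis unfolding e1 e2 ..
qed



lemma sets_prior[simp]: "sets (prior mu1 mu2 s1 s2 r) = sets borel"
  by (simp add: prior_def)

lemma space_prior[simp]: "space (prior mu1 mu2 s1 s2 r) = UNIV"
  by (simp add: prior_def)

lemma emeasure_prior: "A \<in> sets borel \<Longrightarrow> emeasure (prior mu1 mu2 s1 s2 r) A =
   (\<integral>\<^sup>+p. ennreal (binorm_pdf mu1 mu2 s1 s2 r p) * indicator A p \<partial>lborel)"
  unfolding prior_def by (simp add: emeasure_density)

lemma ea_both:
  "ex_ante_payoff mu1 mu2 s1 s2 r DiscBoth = measure (prior mu1 mu2 s1 s2 r) {p. fst p \<ge> 0 \<or> snd p \<ge> 0}"
proof -
  have "ex_ante_payoff mu1 mu2 s1 s2 r DiscBoth =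
     (\<integral>v. indicator {p. fst p \<ge> 0 \<or> snd p \<ge> 0} v \<partial>prior mu1 mu2 s1 s2 r)"
    unfolding ex_ante_payoff_def
    by (rule Bochner_Integration.integral_cong) (auto simp: pv_eq posterior_mean_def split: split_indicator)
  then show ?thesis by simp
qed

lemma thr1:
  fixes s1 s2 r mu1 mu2 x :: real
  assumes s1: "s1 > 0" and s2: "s2 > 0" and r: "0 < r"
  shows "(0 \<le> mu2 + r * s2 / s1 * (x - mu1)) = (mu1 - mu2 * s1 / (r * s2) \<le> x)"
proof -
  define k where "k = r * s2 / s1"
  have k: "k > 0" using assms unfolding k_def by (intro divide_pos_pos mult_pos_pos)
  have e: "mu2 * s1 / (r * s2) = mu2 / k" unfolding k_def using assms by (simp add: field_simps)
  have "(- mu2 / k \<le> x - mu1) = (- mu2 \<le> (x - mu1) * k)" by (rule pos_divide_le_eq[OF k])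
  then have "(0 \<le> mu2 + k * (x - mu1)) = (- mu2 / k \<le> x - mu1)" by (simp add: mult.commute) linarith
  then show ?thesis unfolding e k_def[symmetric] by (simp add: minus_divide_left[symmetric]) linarith
qed

lemma ea_1:
  assumes s1: "s1 > 0" and s2: "s2 > 0" and r: "0 < r" "r < 1"
  shows "ex_ante_payoff mu1 mu2 s1 s2 r Disc1 =
    measure (prior mu1 mu2 s1 s2 r) {p. fst p \<ge> min 0 (mu1 - mu2 * s1 / (r * s2))}"
proof -
  have "ex_ante_payoff mu1 mu2 s1 s2 r Disc1 =
     (\<integral>v. indicator {p. fst p \<ge> min 0 (mu1 - mu2 * s1 / (r * s2))} v \<partial>prior mu1 mu2 s1 s2 r)"
    unfolding ex_ante_payoff_def
  proof (rule Bochner_Integration.integral_cong)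
    fix v :: "real \<times> real"
    obtain x y where v: "v = (x, y)" by fastforce
    show "principal_value approval_payoff (posterior_mean mu1 mu2 s1 s2 r Disc1 v) =
      indicator {p. fst p \<ge> min 0 (mu1 - mu2 * s1 / (r * s2))} v"
      unfolding v pm1[OF assms] pv_eq using thr1[OF s1 s2 r(1), of mu2 x mu1]
      by (auto split: split_indicator)
  qed simp
  then show ?thesis by simp
qed

lemma ea_2:
  assumes s1: "s1 > 0" and s2: "s2 > 0" and r: "0 < r" "r < 1"
  shows "ex_ante_payoff mu1 mu2 s1 s2 r Disc2 =
    measure (prior mu1 mu2 s1 s2 r) {p. snd p \<ge> min 0 (mu2 - mu1 * s2 / (r * s1))}"
proof -
  have "ex_ante_payoff mu1 mu2 s1 s2 r Disc2 =
     (\<integral>v. indicator {p. snd p \<ge> min 0 (mu2 - mu1 * s2 / (r * s1))} v \<partial>prior mu1 mu2 s1 s2 r)"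
    unfolding ex_ante_payoff_def
  proof (rule Bochner_Integration.integral_cong)
    fix v :: "real \<times> real"
    obtain x y where v: "v = (x, y)" by fastforce
    show "principal_value approval_payoff (posterior_mean mu1 mu2 s1 s2 r Disc2 v) =
      indicator {p. snd p \<ge> min 0 (mu2 - mu1 * s2 / (r * s1))} v"
      unfolding v pm2[OF assms] pv_eq using thr1[OF s2 s1 r(1), of mu1 y mu2]
      by (auto split: split_indicator)
  qed simp
  then show ?thesis by simp
qed

lemma prior_swap:
  assumes A[measurable]: "A \<in> sets borel"
  shows "measure (prior mu1 mu2 s1 s2 r) A = measure (prior mu2 mu1 s2 s1 r) {p. (snd p, fst p) \<in> A}"
proof -
  have B[measurable]: "{p::real\<times>real. (snd p, fst p) \<in> A} \<in> sets borel" by measurable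
  have "emeasure (prior mu1 mu2 s1 s2 r) A = emeasure (prior mu2 mu1 s2 s1 r) {p. (snd p, fst p) \<in> A}"
    unfolding emeasure_prior[OF A] emeasure_prior[OF B]
    by (subst nn_swap) (auto simp: pdf_swap[of mu1 mu2 s1 s2 r] indicator_def case_prod_beta)
  then show ?thesis by (simp add: measure_def)
qed

lemma box_pos:
  assumes s1: "s1 > 0" and s2: "s2 > 0" and r: "0 < r" "r < 1" and ab: "a1 < b1" "a2 < b2"
  shows "0 < measure (prior mu1 mu2 s1 s2 r) ({a1<..<b1} \<times> {a2<..<b2})"
proof -
  interpret P: prob_space "prior mu1 mu2 s1 s2 r" by (rule prior_prob[OF s1 s2 r])
  let ?A = "{a1<..<b1} \<times> {a2<..<b2}"
  have Am[measurable]: "?A \<in> sets borel" by (intro borel_open open_Times) auto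
  have lb: "emeasure lborel ?A \<noteq> 0"
  proof -
    have "emeasure lborel ?A = emeasure (lborel \<Otimes>\<^sub>M lborel) ?A" by (simp add: lborel_prod)
    also have "\<dots> = ennreal (b1 - a1) * ennreal (b2 - a2)"
      using ab by (simp add: lborel.emeasure_pair_measure_Times)
    finally show ?thesis using ab by (simp add: ennreal_mult'[symmetric])
  qed
  have "emeasure (prior mu1 mu2 s1 s2 r) ?A \<noteq> 0"
  proof
    assume "emeasure (prior mu1 mu2 s1 s2 r) ?A = 0"
    then have "AE p in lborel. ennreal (binorm_pdf mu1 mu2 s1 s2 r p) * indicator ?A p = 0"
      unfolding emeasure_prior[OF Am] by (subst (asm) nn_integral_0_iff_AE) auto
    then have "AE p in lborel. p \<notin> ?A"
    proof (rule AE_mp, intro AE_I2 impI)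
      fix p assume "ennreal (binorm_pdf mu1 mu2 s1 s2 r p) * indicator ?A p = 0"
      with pdf_pos[OF s1 s2 r, of mu1 mu2 p] show "p \<notin> ?A" by (auto split: split_indicator)
    qed
    then have "emeasure lborel ?A = 0"
      by (subst (asm) AE_iff_measurable[of ?A]) auto
    then show False using lb by simp
  qed
  then show ?thesis using measure_nonneg[of _ ?A] by (simp add: P.emeasure_eq_measure less_le)
qed

lemma line_null:
  assumes s1: "s1 > 0" and s2: "s2 > 0" and r: "0 < r" "r < 1"
  shows "measure (prior mu1 mu2 s1 s2 r) {p. fst p = t} = 0"
proof -
  have m: "{p::real\<times>real. fst p \<in> {t}} \<in> sets borel" by measurable
  have "emeasure (prior mu1 mu2 s1 s2 r) {p. fst p \<in> {t}} = 
     (\<integral>\<^sup>+x. ennreal (normal_density mu1 s1 x) * indicator {t} x \<partial>lborel)"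
    using marg1[OF s1 s2 r, of "{t}"] emeasure_prior[OF m] by simp
  also have "\<dots> = 0"
    by (subst nn_integral_0_iff_AE) (auto intro: AE_mp[OF AE_lborel_singleton[of t]])
  finally have "emeasure (prior mu1 mu2 s1 s2 r) {p. fst p \<in> {t}} = 0" .
  then show ?thesis by (simp add: measure_def)
qed



lemma pw:
  fixes mu1 mu2 s1 s2 r t :: real
  assumes s1: "s1 > 0" and s2: "s2 > 0" and r: "0 < r" "r < 1" and mu2: "mu2 < 0"
    and t: "t = mu1 - mu2 * s1 / (r * s2)" and x: "x \<ge> t"
  shows "binorm_pdf mu1 mu2 s1 s2 r (x, y) \<le> binorm_pdf mu1 mu2 s1 s2 r (2 * t - x, - y)"
proof -
  define k where "k = r * s2 / s1"
  have k: "k > 0" using assms unfolding k_def by (intro divide_pos_pos mult_pos_pos)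
  have tk: "t - mu1 = - mu2 / k" unfolding t k_def using assms by (simp add: field_simps)
  have tm: "t > mu1" using tk k mu2 divide_neg_pos[of mu2 k] by linarith
  have mm: "mu2 + k * (2 * t - x - mu1) = - (mu2 + k * (x - mu1))"
  proof -
    have "k * (t - mu1) = - mu2" using tk k by simp
    then show ?thesis by (simp add: algebra_simps)
  qed
  have nd: "normal_density (mu2 + k * (2 * t - x - mu1)) c (- y) = normal_density (mu2 + k * (x - mu1)) c y" for c
    unfolding normal_density_def mm by (simp add: power2_commute algebra_simps)
  have sq: "(2 * t - x - mu1)\<^sup>2 \<le> (x - mu1)\<^sup>2"
  proof -
    have "(x - mu1)\<^sup>2 - (2 * t - x - mu1)\<^sup>2 = 4 * (x - t) * (t - mu1)" by (simp add: power2_eq_square algebra_simps)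
    moreover have "0 \<le> 4 * (x - t) * (t - mu1)" using x tm by simp
    ultimately show ?thesis by linarith
  qed
  have n1: "normal_density mu1 s1 x \<le> normal_density mu1 s1 (2 * t - x)"
    unfolding normal_density_def using s1 sq
    by (intro mult_left_mono exp_mono divide_right_mono) (auto simp: diff_le_eq)
  have "binorm_pdf mu1 mu2 s1 s2 r (x, y) = normal_density mu1 s1 x * normal_density (mu2 + k * (x - mu1)) (s2 * sqrt (1 - r\<^sup>2)) y"
    unfolding pdf_factor[OF s1 s2 r] k_def ..
  also have "\<dots> \<le> normal_density mu1 s1 (2 * t - x) * normal_density (mu2 + k * (x - mu1)) (s2 * sqrt (1 - r\<^sup>2)) y"
    by (intro mult_right_mono n1) simp
  also have "\<dots> = binorm_pdf mu1 mu2 s1 s2 r (2 * t - x, - y)"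
    unfolding pdf_factor[OF s1 s2 r] k_def[symmetric] nd[symmetric] by (simp add: algebra_simps)
  finally show ?thesis .
qed

lemma refl_le:
  fixes mu1 mu2 s1 s2 r t :: real
  assumes s1: "s1 > 0" and s2: "s2 > 0" and r: "0 < r" "r < 1" and mu2: "mu2 < 0"
    and t: "t = mu1 - mu2 * s1 / (r * s2)" and S[measurable]: "S \<in> sets borel" and St: "\<And>p. p \<in> S \<Longrightarrow> fst p \<ge> t"
  shows "emeasure (prior mu1 mu2 s1 s2 r) S \<le> emeasure (prior mu1 mu2 s1 s2 r) {q. (2 * t, 0) - q \<in> S}"
proof -
  let ?f = "binorm_pdf mu1 mu2 s1 s2 r" and ?c = "(2 * t, 0::real)"
  have S'[measurable]: "{q. ?c - q \<in> S} \<in> sets borel" by measurable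
  have "emeasure (prior mu1 mu2 s1 s2 r) S = (\<integral>\<^sup>+p. ennreal (?f p) * indicator S p \<partial>lborel)"
    by (rule emeasure_prior[OF S])
  also have "\<dots> \<le> (\<integral>\<^sup>+p. ennreal (?f (?c - p)) * indicator S p \<partial>lborel)"
  proof (rule nn_integral_mono)
    fix p :: "real \<times> real"
    show "ennreal (?f p) * indicator S p \<le> ennreal (?f (?c - p)) * indicator S p"
    proof (cases "p \<in> S")
      case True
      obtain x y where p: "p = (x, y)" by fastforce
      have "?f p \<le> ?f (?c - p)" using pw[OF s1 s2 r mu2 t St[OF True[unfolded p]]] unfolding p by simp
      then show ?thesis using True by (simp add: ennreal_leI)
    qed simp
  qed
  also have "\<dots> = (\<integral>\<^sup>+q. ennreal (?f q) * indicator S (?c - q) \<partial>lborel)"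
    by (subst nn_refl[where c = ?c]) (auto simp: algebra_simps)
  also have "\<dots> = emeasure (prior mu1 mu2 s1 s2 r) {q. ?c - q \<in> S}"
    by (subst emeasure_prior[OF S']) (simp add: indicator_def)
  finally show ?thesis .
qed



lemma both_gt_1:
  fixes mu1 mu2 s1 s2 r :: real
  assumes s1: "s1 > 0" and s2: "s2 > 0" and r: "0 < r" "r < 1" and mu2: "mu2 < 0"
  shows "measure (prior mu1 mu2 s1 s2 r) {p. fst p \<ge> min 0 (mu1 - mu2 * s1 / (r * s2))}
       < measure (prior mu1 mu2 s1 s2 r) {p. fst p \<ge> 0 \<or> snd p \<ge> 0}"
proof -
  interpret P: prob_space "prior mu1 mu2 s1 s2 r" by (rule prior_prob[OF s1 s2 r])
  define t where "t = mu1 - mu2 * s1 / (r * s2)"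
  let ?P = "measure (prior mu1 mu2 s1 s2 r)"
  have bp: "\<And>a1 b1 a2 b2. a1 < b1 \<Longrightarrow> a2 < b2 \<Longrightarrow> 0 < ?P ({a1<..<b1} \<times> {a2<..<b2})"
    by (rule box_pos[OF s1 s2 r])
  have bm[measurable]: "\<And>a1 b1 a2 b2::real. ({a1<..<b1} \<times> {a2<..<b2} :: (real \<times> real) set) \<in> sets borel"
    by (intro borel_open open_Times) auto
  show ?thesis
  proof (cases "t \<ge> 0")
    case True
    then have m: "min 0 t = 0" by simp
    have "?P {p. fst p \<ge> 0 \<or> snd p \<ge> 0} = ?P ({p. fst p \<ge> 0} \<union> {p. fst p < 0 \<and> snd p \<ge> 0})"
      by (rule arg_cong[where f = ?P]) auto
    also have "\<dots> = ?P {p. fst p \<ge> 0} + ?P {p. fst p < 0 \<and> snd p \<ge> 0}"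
      by (rule P.finite_measure_Union) auto
    finally have u: "?P {p. fst p \<ge> 0 \<or> snd p \<ge> 0} = ?P {p. fst p \<ge> 0} + ?P {p. fst p < 0 \<and> snd p \<ge> 0}" .
    have "?P ({-1<..<0} \<times> {0<..<1}) \<le> ?P {p. fst p < 0 \<and> snd p \<ge> 0}"
      by (rule P.finite_measure_mono) auto
    then have "?P {p. fst p \<ge> 0} < ?P {p. fst p \<ge> 0 \<or> snd p \<ge> 0}"
      using bp[of "-1" 0 0 1] u by simp
    then show ?thesis using m unfolding t_def by simp
  next
    case False
    then have m: "min 0 t = t" and t0: "t < 0" by auto
    define A0 where "A0 = {p::real\<times>real. fst p \<ge> 0}"
    define E where "E = {p::real\<times>real. fst p < t \<and> snd p \<ge> 0}"
    define F where "F = {p::real\<times>real. t \<le> fst p \<and> fst p < 0 \<and> snd p \<ge> 0}"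
    define D where "D = {p::real\<times>real. t \<le> fst p \<and> fst p < 0 \<and> snd p < 0}"
    define Do where "Do = {p::real\<times>real. t < fst p \<and> fst p < 0 \<and> snd p < 0}"
    define RD where "RD = {q::real\<times>real. (2 * t, 0) - q \<in> Do}"
    have ms[measurable]: "A0 \<in> sets borel" "E \<in> sets borel" "F \<in> sets borel" "D \<in> sets borel" "Do \<in> sets borel"
      "RD \<in> sets borel" "{p::real\<times>real. fst p = t} \<in> sets borel"
      unfolding A0_def E_def F_def D_def Do_def RD_def by measurable
    have "?P {p. fst p \<ge> 0 \<or> snd p \<ge> 0} = ?P (A0 \<union> (E \<union> F))"
      by (rule arg_cong[where f = ?P]) (auto simp: A0_def E_def F_def)
    also have "\<dots> = ?P A0 + ?P (E \<union> F)"
      using t0 by (intro P.finite_measure_Union) (auto simp: ms A0_def E_def F_def)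
    also have "?P (E \<union> F) = ?P E + ?P F"
      by (rule P.finite_measure_Union) (auto simp: ms E_def F_def)
    finally have eb: "?P {p. fst p \<ge> 0 \<or> snd p \<ge> 0} = ?P A0 + (?P E + ?P F)" .
    have "?P {p. fst p \<ge> t} = ?P (A0 \<union> (F \<union> D))"
      using t0 by (intro arg_cong[where f = ?P]) (auto simp: A0_def D_def F_def)
    also have "\<dots> = ?P A0 + ?P (F \<union> D)"
      using t0 by (intro P.finite_measure_Union) (auto simp: ms A0_def D_def F_def)
    also have "?P (F \<union> D) = ?P F + ?P D"
      by (rule P.finite_measure_Union) (auto simp: ms D_def F_def)
    finally have e1: "?P {p. fst p \<ge> t} = ?P A0 + (?P F + ?P D)" .
    have "?P D \<le> ?P (Do \<union> {p. fst p = t})"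
      by (rule P.finite_measure_mono) (auto simp: D_def Do_def)
    also have "\<dots> \<le> ?P Do + ?P {p. fst p = t}"
      by (rule measure_subadditive) (auto simp: ms)
    also have "?P {p. fst p = t} = 0" by (rule line_null[OF s1 s2 r])
    finally have dD: "?P D \<le> ?P Do" by simp
    have "emeasure (prior mu1 mu2 s1 s2 r) Do \<le> emeasure (prior mu1 mu2 s1 s2 r) RD"
      unfolding RD_def by (rule refl_le[OF s1 s2 r mu2 t_def]) (auto simp: Do_def)
    then have dR: "?P Do \<le> ?P RD" by (simp add: P.emeasure_eq_measure)
    have "?P RD + ?P ({2 * t - 1<..<2 * t} \<times> {0<..<1}) = ?P (RD \<union> ({2 * t - 1<..<2 * t} \<times> {0<..<1}))"
      by (rule P.finite_measure_Union[symmetric]) (auto simp: ms RD_def Do_def)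
    also have "\<dots> \<le> ?P E"
      using t0 by (intro P.finite_measure_mono) (auto simp: RD_def Do_def E_def)
    finally have "?P RD < ?P E" using bp[of "2 * t - 1" "2 * t" 0 1] by simp
    then have "?P {p. fst p \<ge> t} < ?P {p. fst p \<ge> 0 \<or> snd p \<ge> 0}"
      using eb e1 dD dR by simp
    then show ?thesis using m unfolding t_def by simp
  qed
qed



abbreviation "SN \<equiv> density lborel (\<lambda>x. ennreal (std_normal_density x))"

lemma marg_std:
  fixes mu1 mu2 s1 s2 r c :: real
  assumes s1: "s1 > 0" and s2: "s2 > 0" and r: "0 < r" "r < 1"
  shows "measure (prior mu1 mu2 s1 s2 r) {p. fst p \<ge> c} = measure SN {(c - mu1) / s1..}"
proof -
  have m: "{p::real\<times>real. fst p \<in> {c..}} \<in> sets borel" by measurable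
  have "emeasure (prior mu1 mu2 s1 s2 r) {p. fst p \<in> {c..}} =
     (\<integral>\<^sup>+x. ennreal (normal_density mu1 s1 x) * indicator {c..} x \<partial>lborel)"
    using marg1[OF s1 s2 r, of "{c..}"] emeasure_prior[OF m] by simp
  also have "\<dots> = ennreal \<bar>s1\<bar> * (\<integral>\<^sup>+z. ennreal (normal_density mu1 s1 (mu1 + s1 * z)) * indicator {c..} (mu1 + s1 * z) \<partial>lborel)"
    by (rule nn_integral_real_affine) (use s1 in auto)
  also have "\<dots> = (\<integral>\<^sup>+z. ennreal s1 * (ennreal (normal_density mu1 s1 (mu1 + s1 * z)) * indicator {c..} (mu1 + s1 * z)) \<partial>lborel)"
    using s1 by (subst nn_integral_cmult) auto
  also have "\<dots> = (\<integral>\<^sup>+z. ennreal (std_normal_density z) * indicator {(c - mu1) / s1..} z \<partial>lborel)"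
  proof (rule nn_integral_cong)
    fix z :: real
    have sq: "sqrt (2 * pi * s1\<^sup>2) = sqrt (2 * pi) * s1" using s1 by (simp add: real_sqrt_mult)
    have d: "s1 * normal_density mu1 s1 (mu1 + s1 * z) = std_normal_density z"
      unfolding normal_density_def sq using s1 by (simp add: power_mult_distrib)
    have i: "(c \<le> mu1 + s1 * z) = ((c - mu1) / s1 \<le> z)"
      using s1 by (simp add: pos_divide_le_eq mult.commute) linarith
    show "ennreal s1 * (ennreal (normal_density mu1 s1 (mu1 + s1 * z)) * indicator {c..} (mu1 + s1 * z)) =
        ennreal (std_normal_density z) * indicator {(c - mu1) / s1..} z"
      using s1 d[symmetric] i by (simp add: ennreal_mult[symmetric] mult.assoc[symmetric] split: split_indicator)
  qed
  also have "\<dots> = emeasure SN {(c - mu1) / s1..}"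
    by (simp add: emeasure_density)
  finally show ?thesis by (simp add: measure_def)
qed

lemma std_mono:
  fixes z1 z2 :: real
  assumes z: "z1 < z2"
  shows "measure SN {z2..} < measure SN {z1..}"
proof -
  interpret S: prob_space SN by (rule prob_space_normal_density) simp
  have "emeasure SN {z1<..<z2} \<noteq> 0"
  proof
    assume "emeasure SN {z1<..<z2} = 0"
    then have "AE x in lborel. ennreal (std_normal_density x) * indicator {z1<..<z2} x = 0"
      by (subst (asm) emeasure_density) (auto simp: nn_integral_0_iff_AE)
    then have "AE x in lborel. x \<notin> {z1<..<z2}"
    proof (rule AE_mp, intro AE_I2 impI)
      fix x assume "ennreal (std_normal_density x) * indicator {z1<..<z2} x = 0"
      moreover have "0 < std_normal_density x" by (rule normal_density_pos) simp
      ultimately show "x \<notin> {z1<..<z2}" by (auto split: split_indicator)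
    qed
    then have "emeasure lborel {z1<..<z2} = 0"
      by (subst (asm) AE_iff_measurable[of "{z1<..<z2}"]) auto
    then show False using z by simp
  qed
  then have p: "0 < measure SN {z1<..<z2}" using measure_nonneg[of SN "{z1<..<z2}"]
    by (simp add: S.emeasure_eq_measure less_le)
  have a: "measure SN ({z1<..<z2} \<union> {z2..}) \<le> measure SN {z1..}"
    using z by (intro S.finite_measure_mono) auto
  have b: "measure SN ({z1<..<z2} \<union> {z2..}) = measure SN {z1<..<z2} + measure SN {z2..}"
    by (rule S.finite_measure_Union) auto
  show ?thesis using a b p by simp
qed

lemma arith1:
  fixes mu1 mu2 s1 s2 r :: real
  assumes s1: "s1 > 0" and s2: "s2 > 0" and r: "0 < r" "r < 1" and m1: "mu1 < 0" and m2: "mu2 < 0"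
    and h: "s1 / mu1 < s2 / mu2"
  shows "(min 0 (mu1 - mu2 * s1 / (r * s2)) - mu1) / s1 < (min 0 (mu2 - mu1 * s2 / (r * s1)) - mu2) / s2"
proof -
  define A where "A = - mu1 / s1"
  define B where "B = - mu2 / s2"
  have Ap: "A > 0" unfolding A_def using s1 m1 divide_neg_pos[of mu1 s1] by simp
  have AB: "A < B"
  proof -
    have "s1 * mu2 < s2 * mu1"
    proof -
      have "s1 / mu1 * (mu1 * mu2) < s2 / mu2 * (mu1 * mu2)"
        using h m1 m2 by (intro mult_strict_right_mono) (auto simp: mult_neg_neg)
      then show ?thesis using m1 m2 by (simp add: field_simps)
    qed
    then show ?thesis unfolding A_def B_def using s1 s2 by (simp add: field_simps)
  qed
  have L: "(min 0 (mu1 - mu2 * s1 / (r * s2)) - mu1) / s1 \<le> A"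
    unfolding A_def using s1 by (intro divide_right_mono) auto
  have R1: "A < (0 - mu2) / s2" using AB unfolding B_def by simp
  have R2: "A < (mu2 - mu1 * s2 / (r * s1) - mu2) / s2"
  proof -
    have "(mu2 - mu1 * s2 / (r * s1) - mu2) / s2 = A / r" unfolding A_def using s1 s2 r by (simp add: field_simps)
    moreover have "A < A / r" using Ap r by (simp add: less_divide_eq)
    ultimately show ?thesis by simp
  qed
  have "A < (min 0 (mu2 - mu1 * s2 / (r * s1)) - mu2) / s2"
    using R1 R2 by (cases "0 \<le> mu2 - mu1 * s2 / (r * s1)") (auto simp: min_def)
  then show ?thesis using L by linarith
qed



theorem proposition3:
  fixes mu1 mu2 s1 s2 r :: real
  assumes "s1 > 0" and "s2 > 0" and "0 < r" and "r < 1"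
    and "mu1 < mu2" and "mu2 < 0"
  shows "(s1 / mu1 < s2 / mu2 \<longrightarrow> better mu1 mu2 s1 s2 r Disc1 Disc2)
       \<and> (s2 / mu2 < s1 / mu1 \<longrightarrow> better mu1 mu2 s1 s2 r Disc2 Disc1)
       \<and> better mu1 mu2 s1 s2 r DiscBoth Disc1
       \<and> better mu1 mu2 s1 s2 r DiscBoth Disc2"
proof -
  note s1 = \<open>s1 > 0\<close> and s2 = \<open>s2 > 0\<close> and r = \<open>0 < r\<close> \<open>r < 1\<close>
  have m2: "mu2 < 0" and m1: "mu1 < 0" using assms by auto
  define t1 where "t1 = mu1 - mu2 * s1 / (r * s2)"
  define t2 where "t2 = mu2 - mu1 * s2 / (r * s1)"
  let ?M = "prior mu1 mu2 s1 s2 r" and ?M' = "prior mu2 mu1 s2 s1 r"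
  have EB: "ex_ante_payoff mu1 mu2 s1 s2 r DiscBoth = measure ?M {p. fst p \<ge> 0 \<or> snd p \<ge> 0}"
    by (rule ea_both)
  have EB': "ex_ante_payoff mu1 mu2 s1 s2 r DiscBoth = measure ?M' {p. fst p \<ge> 0 \<or> snd p \<ge> 0}"
  proof -
    have "measure ?M {p. fst p \<ge> 0 \<or> snd p \<ge> 0} = measure ?M' {p. (snd p, fst p) \<in> {p. fst p \<ge> 0 \<or> snd p \<ge> 0}}"
      by (rule prior_swap) measurable
    also have "{p::real\<times>real. (snd p, fst p) \<in> {p. fst p \<ge> 0 \<or> snd p \<ge> 0}} = {p. fst p \<ge> 0 \<or> snd p \<ge> 0}"
      by auto
    finally show ?thesis using EB by simp
  qed
  have E1: "ex_ante_payoff mu1 mu2 s1 s2 r Disc1 = measure ?M {p. fst p \<ge> min 0 t1}"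
    unfolding t1_def by (rule ea_1[OF s1 s2 r])
  have E2: "ex_ante_payoff mu1 mu2 s1 s2 r Disc2 = measure ?M' {p. fst p \<ge> min 0 t2}"
  proof -
    have "ex_ante_payoff mu1 mu2 s1 s2 r Disc2 = measure ?M {p. snd p \<ge> min 0 t2}"
      unfolding t2_def by (rule ea_2[OF s1 s2 r])
    also have "\<dots> = measure ?M' {p. (snd p, fst p) \<in> {p. snd p \<ge> min 0 t2}}"
      by (rule prior_swap) measurable
    finally show ?thesis by simp
  qed
  have G1: "measure ?M {p. fst p \<ge> min 0 t1} = measure SN {(min 0 t1 - mu1) / s1..}"
    by (rule marg_std[OF s1 s2 r])
  have G2: "measure ?M' {p. fst p \<ge> min 0 t2} = measure SN {(min 0 t2 - mu2) / s2..}"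
    by (rule marg_std[OF s2 s1 r])
  have b1: "better mu1 mu2 s1 s2 r DiscBoth Disc1"
    unfolding better_def EB E1 t1_def by (rule both_gt_1[OF s1 s2 r m2])
  have b2: "better mu1 mu2 s1 s2 r DiscBoth Disc2"
    unfolding better_def EB' E2 t2_def by (rule both_gt_1[OF s2 s1 r m1])
  have c1: "better mu1 mu2 s1 s2 r Disc1 Disc2" if h: "s1 / mu1 < s2 / mu2"
  proof -
    have a: "(min 0 t1 - mu1) / s1 < (min 0 t2 - mu2) / s2"
      unfolding t1_def t2_def by (rule arith1[OF s1 s2 r m1 m2 h])
    show ?thesis unfolding better_def E1 E2 G1 G2 by (rule std_mono[OF a])
  qed
  have c2: "better mu1 mu2 s1 s2 r Disc2 Disc1" if h: "s2 / mu2 < s1 / mu1"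
  proof -
    have a: "(min 0 t2 - mu2) / s2 < (min 0 t1 - mu1) / s1"
      unfolding t1_def t2_def by (rule arith1[OF s2 s1 r m2 m1 h])
    show ?thesis unfolding better_def E1 E2 G1 G2 by (rule std_mono[OF a])
  qed
  show ?thesis using b1 b2 c1 c2 by blast
qed

end
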